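(* Let $\sigma\in S_K$ be a permutation pattern whose length is at most one less than the length of the longest element of $S_K$, i.e. $\operatorname{len}(\sigma)\ge\binom{K}{2}-1$. Then $\sigma$ admits a bountiful width system.
   Context: $\operatorname{len}(\sigma)$ is the Coxeter length (number of inversions) of $\sigma$; the longest element of $S_K$ has length $\binom K2$. For $x=[x_1,\dots,x_N]\in S_N$ and $\tau\in S_k$, an instance of $\tau$ in $x$ is a tuple of positions $P=(P_1<\dots<P_k)$ with $(x_{P_1},\dots,x_{P_k})$ in the same relative order as $\tau$. A width system for $\tau$ is a finite sequence of pairs $(a_1,b_1),\dots,(a_m,b_m)$ with $1\le a_l<b_l\le k$, assigning to each instance $P$ the tuple $w(P)=(P_{b_1}-P_{a_1},\dots,P_{b_m}-P_{a_m})$. An instance is minimal in $x$ if $w(P)$ is lexicographically minimal among all instances of $\tau$ in $x$, and locally minimal if it is a minimal instance of $\tau$ in the consecutive segment $[x_{P_1},x_{P_1+1},\dots,x_{P_k}]$. The width system is bountiful if for every $x\in S_N$ (any $N$), every locally minimal instance $P$ and every position $t$ with $P_1<t<P_k$, $t\notin\{P_1,\dots,P_k\}$, either $x_t<x_{P_j}$ for all $j$ with $P_j<t$, or $x_t>x_{P_j}$ for all $j$ with $P_j>t$. $\tau$ admits a bountiful width system if some width system for $\tau$ is bountiful. *)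

theory Defs
  imports Main
begin

text \<open>Permutations are lists of values; positions are 0-indexed (only differences of
positions and their relative order matter, so this is harmless).\<close>

definition is_perm :: "nat \<Rightarrow> nat list \<Rightarrow> bool" where
  "is_perm N x \<longleftrightarrow> length x = N \<and> distinct x \<and> set x = {1..N}"

definition perm_len :: "nat list \<Rightarrow> nat" where
  "perm_len s = card {(i, j). i < j \<and> j < length s \<and> s ! i > s ! j}"

definition is_instance :: "nat list \<Rightarrow> nat list \<Rightarrow> nat list \<Rightarrow> bool" where
  "is_instance tau x P \<longleftrightarrow>
     length P = length tau \<and> sorted_wrt (<) P \<and> (\<forall>p\<in>set P. p < length x) \<and>
     (\<forall>i<length tau. \<forall>j<length tau. (x ! (P ! i) < x ! (P ! j)) \<longleftrightarrow> (tau ! i < tau ! j))"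

definition is_width_system :: "nat list \<Rightarrow> (nat \<times> nat) list \<Rightarrow> bool" where
  "is_width_system tau ws \<longleftrightarrow> (\<forall>(a, b)\<in>set ws. a < b \<and> b < length tau)"

definition width :: "(nat \<times> nat) list \<Rightarrow> nat list \<Rightarrow> nat list" where
  "width ws P = map (\<lambda>(a, b). P ! b - P ! a) ws"

definition is_minimal :: "nat list \<Rightarrow> (nat \<times> nat) list \<Rightarrow> nat list \<Rightarrow> nat list \<Rightarrow> bool" where
  "is_minimal tau ws x P \<longleftrightarrow> is_instance tau x P \<and>
     (\<forall>Q. is_instance tau x Q \<longrightarrow> (width ws Q, width ws P) \<notin> lexord {(a, b). a < b})"

definition segment :: "nat list \<Rightarrow> nat list \<Rightarrow> nat list" where
  "segment x P = drop (hd P) (take (last P + 1) x)"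

definition is_locally_minimal :: "nat list \<Rightarrow> (nat \<times> nat) list \<Rightarrow> nat list \<Rightarrow> nat list \<Rightarrow> bool" where
  "is_locally_minimal tau ws x P \<longleftrightarrow> is_instance tau x P \<and>
     (P = [] \<or> is_minimal tau ws (segment x P) (map (\<lambda>p. p - hd P) P))"

definition bountiful :: "nat list \<Rightarrow> (nat \<times> nat) list \<Rightarrow> bool" where
  "bountiful tau ws \<longleftrightarrow>
     (\<forall>N x P t. is_perm N x \<longrightarrow> is_locally_minimal tau ws x P \<longrightarrow>
        (\<exists>i<length P. P ! i < t) \<longrightarrow> (\<exists>j<length P. t < P ! j) \<longrightarrow> t \<notin> set P \<longrightarrow>
        (\<forall>j<length P. P ! j < t \<longrightarrow> x ! t < x ! (P ! j)) \<or>
        (\<forall>j<length P. t < P ! j \<longrightarrow> x ! t > x ! (P ! j)))"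

definition admits_bountiful :: "nat list \<Rightarrow> bool" where
  "admits_bountiful tau \<longleftrightarrow> (\<exists>ws. is_width_system tau ws \<and> bountiful tau ws)"

end

theory Submission
  imports Defs
begin

lemma card_Allp: "card {(i,j). i<j \<and> j<(n::nat)} = n choose 2"
proof (induction n)
  case 0 show ?case by simp
next
  case (Suc n)
  have eq: "{(i,j). i<j \<and> j<Suc n} = {(i,j). i<j \<and> j<n} \<union> (\<lambda>i. (i,n)) ` {..<n}" by auto
  have fin: "finite {(i,j). i<j \<and> j<(n::nat)}"
    by (rule finite_subset[of _ "{..<n} \<times> {..<n}"]) auto
  have disj: "{(i,j). i<j \<and> j<n} \<inter> (\<lambda>i. (i,n)) ` {..<n} = {}" by auto
  have ci: "card ((\<lambda>i. (i,n)) ` {..<n}) = n" by (simp add: card_image inj_on_def)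
  have "card {(i,j). i<j \<and> j<Suc n} = (n choose 2) + n"
    unfolding eq by (subst card_Un_disjoint) (use fin disj ci Suc.IH in auto)
  also have "\<dots> = Suc n choose 2" by (simp add: numeral_2_eq_2)
  finally show ?case .
qed

lemma NI_unique:
  assumes perm: "is_perm K sigma" and le: "int (perm_len sigma) \<ge> int (K choose 2) - 1"
    and "i<j" "j<K" "sigma!i<sigma!j" "i'<j'" "j'<K" "sigma!i'<sigma!j'"
  shows "i=i' \<and> j=j'"
proof -
  have len: "length sigma = K" and dis: "distinct sigma" using perm by (auto simp: is_perm_def)
  define A where "A = {(i,j). i<j \<and> j<K}"
  define I where "I = {(i, j). i < j \<and> j < length sigma \<and> sigma ! i > sigma ! j}"
  define NI where "NI = {(i, j). i < j \<and> j < K \<and> sigma ! i < sigma ! j}"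
  have finA: "finite A" unfolding A_def
    by (rule finite_subset[of _ "{..<K} \<times> {..<K}"]) auto
  have "A = I \<union> NI"
  proof
    show "A \<subseteq> I \<union> NI"
    proof
      fix p assume "p \<in> A"
      then obtain u v where p: "p = (u,v)" "u<v" "v<K" unfolding A_def by auto
      have "sigma!u \<noteq> sigma!v" using dis p len by (simp add: nth_eq_iff_index_eq)
      then show "p \<in> I \<union> NI" using p len unfolding I_def NI_def by auto
    qed
  qed (auto simp: A_def I_def NI_def len)
  moreover have "I \<inter> NI = {}" unfolding I_def NI_def by auto
  ultimately have "card A = card I + card NI"
    using finA by (metis card_Un_disjoint finite_Un)
  moreover have "card A = K choose 2" unfolding A_def by (rule card_Allp)
  moreover have "perm_len sigma = card I" unfolding perm_len_def I_def by simp
  ultimately have "card NI \<le> Suc 0" using le by linarith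
  moreover have "finite NI" using finA \<open>A = I \<union> NI\<close> by auto
  ultimately have "\<forall>p\<in>NI. \<forall>q\<in>NI. p = q" using card_le_Suc0_iff_eq by blast
  then show ?thesis using assms unfolding NI_def by auto
qed

lemma fail_NI:
  assumes "is_perm N x" "is_instance tau x P" "j<length P" "P!j<t" "\<not> x!t < x!(P!j)"
    "l<length P" "t<P!l" "\<not> x!t > x!(P!l)" "t \<notin> set P"
  shows "j<l \<and> x!(P!j) < x!t \<and> x!t < x!(P!l) \<and> tau!j < tau!l"
proof -
  have srt: "sorted_wrt (<) P" and lP: "length P = length tau"
    and bnd: "\<forall>p\<in>set P. p < length x"
    and ord: "\<forall>i<length tau. \<forall>j<length tau. (x ! (P ! i) < x ! (P ! j)) \<longleftrightarrow> (tau ! i < tau ! j)"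
    using assms(2) by (auto simp: is_instance_def)
  have dx: "distinct x" using assms(1) by (simp add: is_perm_def)
  have jl: "j<l"
  proof (rule ccontr)
    assume "\<not> j<l"
    then have "l < j \<or> l = j" by auto
    then have "P!l \<le> P!j" using sorted_wrt_nth_less[OF srt, of l j] assms(3) by auto
    then show False using assms by auto
  qed
  have Pl: "P!l < length x" using bnd assms(6) by auto
  have Pj: "P!j < length x" using bnd assms(3) by auto
  have tx: "t < length x" using Pl assms(7) by auto
  have "P!j \<noteq> t" "P!l \<noteq> t" using assms(3,6,9) by (auto simp: in_set_conv_nth)
  then have "x!t \<noteq> x!(P!j)" "x!t \<noteq> x!(P!l)" using dx tx Pl Pj by (auto simp: nth_eq_iff_index_eq)
  then have v: "x!(P!j) < x!t" "x!t < x!(P!l)" using assms(5,8) by auto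
  then have "x!(P!j) < x!(P!l)" by simp
  then have "tau!j < tau!l" using ord assms(3,6) lP by auto
  then show ?thesis using jl v by auto
qed

lemma no_between:
  assumes lm: "is_locally_minimal sigma [(a,Suc a)] x P" and ab: "Suc a < length P"
    and t1: "P!a < t" and t2: "t < P!(Suc a)"
    and v1: "x!(P!a) < x!t" and v2: "x!t < x!(P!(Suc a))"
    and F1: "\<forall>k<a. x!(P!(Suc a)) < x!(P!k)"
    and F2: "\<forall>k. Suc a<k \<and> k<length P \<longrightarrow> x!(P!k) < x!(P!a)"
  shows False
proof -
  have inst: "is_instance sigma x P" using lm by (simp add: is_locally_minimal_def)
  have srt: "sorted_wrt (<) P" and lP: "length P = length sigma"
    and bnd: "\<forall>p\<in>set P. p < length x"
    and ord: "\<forall>i<length sigma. \<forall>j<length sigma. (x ! (P ! i) < x ! (P ! j)) \<longleftrightarrow> (sigma ! i < sigma ! j)"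
    using inst by (auto simp: is_instance_def)
  have ne: "P \<noteq> []" using ab by auto
  define h where "h = hd P"
  define L where "L = last P"
  have h0: "h = P!0" using ne by (simp add: h_def hd_conv_nth)
  have L0: "L = P!(length P - 1)" using ne by (simp add: L_def last_conv_nth)
  have ge: "h \<le> P!i \<and> P!i \<le> L" if "i<length P" for i
  proof -
    have "P!0 \<le> P!i" using sorted_wrt_nth_less[OF srt, of 0 i] that by (cases "i=0") auto
    moreover have "P!i \<le> P!(length P - 1)" using sorted_wrt_nth_less[OF srt, of i "length P - 1"] that
      by (cases "i = length P - 1") (auto simp: less_imp_le)
    ultimately show ?thesis using h0 L0 by simp
  qed
  have Lx: "L < length x" using bnd L0 ne by auto
  define seg where "seg = segment x P"
  have lseg: "length seg = Suc L - h" unfolding seg_def segment_def using Lx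
    by (simp add: h_def L_def)
  have hL: "h \<le> L" using ge[of 0] ne by auto
  have segnth: "seg!(q - h) = x!q" if "h \<le> q" "q \<le> L" for q
    unfolding seg_def segment_def using that Lx by (simp add: h_def[symmetric] L_def[symmetric])
  have minP: "is_minimal sigma [(a,Suc a)] seg (map (\<lambda>p. p - h) P)"
    using lm ne by (simp add: is_locally_minimal_def seg_def h_def)
  define R where "R = P[Suc a := t]"
  have lR: "length R = length P" by (simp add: R_def)
  have Rn: "R!i = (if i = Suc a then t else P!i)" if "i<length P" for i
    using that by (simp add: R_def)
  have Pa: "P!a < P!(Suc a)" using sorted_wrt_nth_less[OF srt, of a "Suc a"] ab by auto
  have Rge: "h \<le> R!i \<and> R!i \<le> L" if "i<length P" for i
    using ge[of i] ge[of a] ge[of "Suc a"] that ab t1 t2 Rn[OF that] by auto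
  have Rsrt: "R!i < R!k" if "i<k" "k<length P" for i k
  proof -
    have pik: "P!i < P!k" using sorted_wrt_nth_less[OF srt] that by auto
    show ?thesis
    proof (cases "i = Suc a")
      case True
      then have "P!(Suc a) < P!k" using sorted_wrt_nth_less[OF srt, of "Suc a" k] that by auto
      then show ?thesis using True that Rn t2 by auto
    next
      case False
      note iF = False
      show ?thesis
      proof (cases "k = Suc a")
        case True
        then have "i \<le> a" using that by auto
        then have "P!i \<le> P!a" using sorted_wrt_nth_less[OF srt, of i a] ab by (cases "i=a") auto
        then show ?thesis using True iF that Rn t1 by auto
      qed (use iF that Rn pik in auto)
    qed
  qed
  define Q where "Q = map (\<lambda>p. p - h) R"
  have Qn: "Q!i = R!i - h" if "i<length P" for i using that lR by (simp add: Q_def)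
  have key: "x!(R!i) < x!(R!k) \<longleftrightarrow> x!(P!i) < x!(P!k)" if "i<length P" "k<length P" for i k
  proof -
    have A: "x!t < x!(P!k) \<longleftrightarrow> x!(P!(Suc a)) < x!(P!k)" if kk: "k<length P" "k \<noteq> Suc a" for k
    proof -
      consider "k<a" | "k=a" | "Suc a<k" using kk by arith
      then show ?thesis
      proof cases
        case 1 then show ?thesis using F1 v2 by force
      next
        case 2 then show ?thesis using v1 v2 by auto
      next
        case 3 then have "x!(P!k) < x!(P!a)" using F2 kk by auto
        then show ?thesis using v1 v2 by auto
      qed
    qed
    have B: "x!(P!k) < x!t \<longleftrightarrow> x!(P!k) < x!(P!(Suc a))" if kk: "k<length P" "k \<noteq> Suc a" for k
    proof -
      consider "k<a" | "k=a" | "Suc a<k" using kk by arith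
      then show ?thesis
      proof cases
        case 1 then show ?thesis using F1 v2 by force
      next
        case 2 then show ?thesis using v1 v2 by auto
      next
        case 3 then have "x!(P!k) < x!(P!a)" using F2 kk by auto
        then show ?thesis using v1 v2 by auto
      qed
    qed
    show ?thesis using A[of k] B[of i] Rn that by auto
  qed
  have instQ: "is_instance sigma seg Q"
    unfolding is_instance_def
  proof (intro conjI)
    show "length Q = length sigma" using lR lP by (simp add: Q_def)
    show "sorted_wrt (<) Q" unfolding sorted_wrt_iff_nth_less
    proof (intro allI impI)
      fix i k assume "i<k" "k<length Q"
      then show "Q!i < Q!k" using Rsrt[of i k] Rge[of i] Rge[of k] Qn lR by (auto simp: Q_def)
    qed
    show "\<forall>p\<in>set Q. p < length seg"
    proof
      fix p assume "p \<in> set Q"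
      then obtain i where "i<length P" "p = Q!i" using lR by (auto simp: Q_def in_set_conv_nth)
      then show "p < length seg" using Rge[of i] Qn lseg by auto
    qed
    show "\<forall>i<length sigma. \<forall>j<length sigma. (seg ! (Q ! i) < seg ! (Q ! j)) \<longleftrightarrow> (sigma ! i < sigma ! j)"
    proof (intro allI impI)
      fix i j assume "i<length sigma" "j<length sigma"
      then have ij: "i<length P" "j<length P" using lP by auto
      have "seg!(Q!i) = x!(R!i)" "seg!(Q!j) = x!(R!j)"
        using Qn ij segnth Rge by auto
      then show "(seg ! (Q ! i) < seg ! (Q ! j)) \<longleftrightarrow> (sigma ! i < sigma ! j)"
        using key[OF ij] ord \<open>i<length sigma\<close> \<open>j<length sigma\<close> by auto
    qed
  qed
  have "(width [(a,Suc a)] Q, width [(a,Suc a)] (map (\<lambda>p. p - h) P)) \<in> lexord {(a, b). a < b}"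
    using Qn[of a] Qn[of "Suc a"] Rn[of a] Rn[of "Suc a"] ab ge[of a] t1 t2
    by (simp add: width_def)
  then show False using minP instQ by (auto simp: is_minimal_def)
qed

theorem mainTheorem18:
  fixes K :: nat and sigma :: "nat list"
  assumes "is_perm K sigma"
    and "int (perm_len sigma) \<ge> int (K choose 2) - 1"
  shows "admits_bountiful sigma"
proof -
  have len: "length sigma = K" and dis: "distinct sigma" using assms(1) by (auto simp: is_perm_def)
  have dist: "sigma!i \<noteq> sigma!j" if "i<K" "j<K" "i\<noteq>j" for i j
    using dis len that by (simp add: nth_eq_iff_index_eq)
  note U = NI_unique[OF assms]
  show ?thesis
  proof (cases "\<exists>a b. a<b \<and> b<K \<and> sigma!a<sigma!b")
    case False
    have "bountiful sigma []"
      unfolding bountiful_def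
    proof (intro allI impI)
      fix N x P t
      assume pm: "is_perm N x" and lm: "is_locally_minimal sigma [] x P"
        and ex1: "\<exists>i<length P. P ! i < t" and ex2: "\<exists>j<length P. t < P ! j" and tn: "t \<notin> set P"
      have inst: "is_instance sigma x P" using lm by (simp add: is_locally_minimal_def)
      have lP: "length P = K" using inst len by (simp add: is_instance_def)
      show "(\<forall>j<length P. P ! j < t \<longrightarrow> x ! t < x ! (P ! j)) \<or>
        (\<forall>j<length P. t < P ! j \<longrightarrow> x ! t > x ! (P ! j))"
      proof (rule ccontr)
        assume "\<not> ?thesis"
        then obtain j l where "j<length P" "P!j<t" "\<not> x!t < x!(P!j)"
          "l<length P" "t<P!l" "\<not> x!t > x!(P!l)" by auto
        from fail_NI[OF pm inst this tn] show False using False lP \<open>l<length P\<close> by auto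
      qed
    qed
    then show ?thesis unfolding admits_bountiful_def is_width_system_def
      by (intro exI[of _ "[]"]) auto
  next
    case True
    then obtain a b where ab: "a<b" "b<K" "sigma!a<sigma!b" by auto
    have U2: "i = a \<and> j = b" if "i<j" "j<K" "sigma!i<sigma!j" for i j
      using U[OF that ab] by auto
    have bS: "b = Suc a"
    proof (rule ccontr)
      assume "b \<noteq> Suc a"
      then have c: "Suc a < b" using ab by auto
      have "\<not> sigma!a < sigma!(Suc a)" using U2[of a "Suc a"] c ab by auto
      moreover have "\<not> sigma!(Suc a) < sigma!b" using U2[of "Suc a" b] c ab by auto
      moreover have "sigma!a \<noteq> sigma!(Suc a)" "sigma!(Suc a) \<noteq> sigma!b"
        using dist c ab by auto
      ultimately show False using ab by auto
    qed
    have S1: "sigma!b < sigma!k" if "k<a" for k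
    proof -
      have "\<not> sigma!k < sigma!b" using U2[of k b] that ab by auto
      moreover have "sigma!k \<noteq> sigma!b" using dist that ab by auto
      ultimately show ?thesis by auto
    qed
    have S2: "sigma!k < sigma!a" if "b<k" "k<K" for k
    proof -
      have "\<not> sigma!a < sigma!k" using U2[of a k] that ab by auto
      moreover have "sigma!k \<noteq> sigma!a" using dist that ab by auto
      ultimately show ?thesis by auto
    qed
    have "bountiful sigma [(a, Suc a)]"
      unfolding bountiful_def
    proof (intro allI impI)
      fix N x P t
      assume pm: "is_perm N x" and lm: "is_locally_minimal sigma [(a, Suc a)] x P"
        and ex1: "\<exists>i<length P. P ! i < t" and ex2: "\<exists>j<length P. t < P ! j" and tn: "t \<notin> set P"
      have inst: "is_instance sigma x P" using lm by (simp add: is_locally_minimal_def)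
      have lP: "length P = K" using inst len by (simp add: is_instance_def)
      have ord: "\<forall>i<length sigma. \<forall>j<length sigma. (x ! (P ! i) < x ! (P ! j)) \<longleftrightarrow> (sigma ! i < sigma ! j)"
        using inst by (simp add: is_instance_def)
      show "(\<forall>j<length P. P ! j < t \<longrightarrow> x ! t < x ! (P ! j)) \<or>
        (\<forall>j<length P. t < P ! j \<longrightarrow> x ! t > x ! (P ! j))"
      proof (rule ccontr)
        assume "\<not> ?thesis"
        then obtain j l where jl: "j<length P" "P!j<t" "\<not> x!t < x!(P!j)"
          "l<length P" "t<P!l" "\<not> x!t > x!(P!l)" by auto
        from fail_NI[OF pm inst jl tn] have f: "j<l" "x!(P!j) < x!t" "x!t < x!(P!l)" "sigma!j < sigma!l"
          by auto
        have "j = a" "l = b" using U2[OF f(1) _ f(4)] jl(4) lP by auto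
        show False
        proof (rule no_between[OF lm])
          show "Suc a < length P" using ab bS lP by auto
          show "P!a < t" "t < P!(Suc a)" "x!(P!a) < x!t" "x!t < x!(P!(Suc a))"
            using jl f \<open>j = a\<close> \<open>l = b\<close> bS by auto
          show "\<forall>k<a. x!(P!(Suc a)) < x!(P!k)"
            using S1 ord ab bS len by auto
          show "\<forall>k. Suc a<k \<and> k<length P \<longrightarrow> x!(P!k) < x!(P!a)"
            using S2 ord ab bS len lP by auto
        qed
      qed
    qed
    then show ?thesis unfolding admits_bountiful_def is_width_system_def using ab bS len
      by (intro exI[of _ "[(a, Suc a)]"]) auto
  qed
qed

end
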